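(* Let $\mathcal{M}\subset\mathbb{R}^n$ be a locally symmetric $C^2$ submanifold and let $\sigma_*\in\Sigma^n$ be such that $\mathcal{M}\cap B(y,\rho)\subseteq\Delta(\sigma_* )$ for some $y\in\mathcal{M}$ and $\rho>0$. Then for every $\bar x\in\mathcal{M}$ and every $\delta>0$, $\mathcal{M}\cap\Delta(\sigma_* )\cap B(\bar x,\delta)\ne\emptyset$.
   Context: $\Sigma^n$ permutations of $\mathbb{N}_n$ acting by $(\sigma x)_i=x_{\sigma^{-1}(i)}$; $P(\sigma)$ orbit partition; $P(x)$ partition by equal coordinates; $\Delta(\sigma)=\{x:P(x)=P(\sigma)\}$. $\mathbb{R}^n_\ge=\{x:x_1\ge\cdots\ge x_n\}$; $B$ open ball. A set $S$ is locally symmetric if $S\cap\mathbb{R}^n_\ge\ne\emptyset$ and each $x\in S$ has $\delta>0$ with $\sigma(S\cap B(x,\delta))=S\cap B(x,\delta)$ for all $y\in S\cap B(x,\delta)$, all $\sigma$ with $\sigma y=y$. A locally symmetric $C^2$ submanifold is a connected $C^2$ submanifold without boundary which is locally symmetric. *)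

theory Defs
  imports "HOL-Analysis.Analysis"
begin

text \<open>R^n is modelled as real^'n with 'n a finite linearly ordered index type
  (isomorphic to {1..n} with its usual order).\<close>

definition perm_act :: "('n \<Rightarrow> 'n) \<Rightarrow> real^'n \<Rightarrow> real^'n" where
  "perm_act \<sigma> x = (\<chi> i. x $ (inv \<sigma> i))"

definition orbit_partition :: "('n \<Rightarrow> 'n) \<Rightarrow> 'n set set" where
  "orbit_partition \<sigma> = UNIV // {(i, j). \<exists>k. (\<sigma> ^^ k) i = j}"

definition coord_partition :: "real^'n \<Rightarrow> 'n set set" where
  "coord_partition x = UNIV // {(i, j). x $ i = x $ j}"

definition Delta :: "('n \<Rightarrow> 'n) \<Rightarrow> (real^'n) set" where
  "Delta \<sigma> = {x. coord_partition x = orbit_partition \<sigma>}"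

definition ordered_cone :: "(real^'n::{finite,linorder}) set" where
  "ordered_cone = {x. \<forall>i j. i \<le> j \<longrightarrow> x $ j \<le> x $ i}"

definition locally_symmetric :: "(real^'n::{finite,linorder}) set \<Rightarrow> bool" where
  "locally_symmetric S \<longleftrightarrow> S \<inter> ordered_cone \<noteq> {} \<and>
    (\<forall>x\<in>S. \<exists>\<delta>>0. \<forall>y\<in>S \<inter> ball x \<delta>. \<forall>\<sigma>. \<sigma> permutes UNIV \<and> perm_act \<sigma> y = y \<longrightarrow>
        perm_act \<sigma> ` (S \<inter> ball x \<delta>) = S \<inter> ball x \<delta>)"

definition C2_on :: "'a::real_normed_vector set \<Rightarrow> ('a \<Rightarrow> 'b::real_normed_vector) \<Rightarrow> bool" where
  "C2_on U f \<longleftrightarrow> (\<exists>(f' :: 'a \<Rightarrow> ('a \<Rightarrow>\<^sub>L 'b)) (f'' :: 'a \<Rightarrow> ('a \<Rightarrow>\<^sub>L ('a \<Rightarrow>\<^sub>L 'b))).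
      (\<forall>x\<in>U. (f has_derivative blinfun_apply (f' x)) (at x)) \<and>
      (\<forall>x\<in>U. (f' has_derivative blinfun_apply (f'' x)) (at x)) \<and>
      continuous_on U f'')"

definition C2_submanifold :: "(real^'n) set \<Rightarrow> bool" where
  "C2_submanifold M \<longleftrightarrow> (\<forall>x\<in>M. \<exists>U V (\<phi> :: real^'n \<Rightarrow> real^'n) \<psi> L.
      open U \<and> x \<in> U \<and> open V \<and> subspace L \<and> C2_on U \<phi> \<and> C2_on V \<psi> \<and>
      \<phi> ` U = V \<and> (\<forall>y\<in>U. \<psi> (\<phi> y) = y) \<and> (\<forall>z\<in>V. \<phi> (\<psi> z) = z) \<and>
      \<phi> ` (M \<inter> U) = V \<inter> L)"

definition locally_symmetric_C2_submanifold :: "(real^'n::{finite,linorder}) set \<Rightarrow> bool" where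
  "locally_symmetric_C2_submanifold M \<longleftrightarrow>
     connected M \<and> C2_submanifold M \<and> locally_symmetric M"

end

theory Submission
  imports Defs
begin


definition KE :: "('n \<times> 'n) set \<Rightarrow> (real^'n) set" where
  "KE E = {x. \<forall>(i,j)\<in>E. x$i = x$j}"

lemma perm_act_swap_nth: "perm_act (Transposition.transpose i j) a $ l = a $ (Transposition.transpose i j l)"
  by (simp add: perm_act_def)

lemma perm_act_swap_diff: "perm_act (Transposition.transpose i j) (a - b) = perm_act (Transposition.transpose i j) a - perm_act (Transposition.transpose i j) b"
  by (simp add: perm_act_def vec_eq_iff)

lemma perm_act_swap_norm: "norm (perm_act (Transposition.transpose i j) a) = norm a"
proof -
  have p: "Transposition.transpose i j permutes UNIV" by (simp add: permutes_swap_id)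
  have "(\<Sum>l\<in>UNIV. (norm (a $ (Transposition.transpose i j l)))\<^sup>2) = (\<Sum>l\<in>UNIV. (norm (a $ l))\<^sup>2)"
    using sum.permute[OF p, of "\<lambda>l. (norm (a $ l))\<^sup>2"] by (simp add: comp_def)
  thus ?thesis by (simp add: norm_vec_def L2_set_def perm_act_swap_nth)
qed

lemma perm_act_swap_fix: "x $ i = x $ j \<Longrightarrow> perm_act (Transposition.transpose i j) x = x"
  unfolding vec_eq_iff perm_act_swap_nth Transposition.transpose_def by auto

lemma inner_swap_zero:
  assumes "T $ i = T $ j"
  shows "inner (a - perm_act (Transposition.transpose i j) a) T = 0"
proof (cases "i = j")
  case True thus ?thesis by (simp add: perm_act_def)
next
  case False
  let ?d = "a - perm_act (Transposition.transpose i j) a"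
  have d: "\<And>l. ?d $ l = (if l = i then a$i - a$j else if l = j then a$j - a$i else 0)"
    by (auto simp: perm_act_swap_nth Transposition.transpose_def)
  have "inner ?d T = (\<Sum>l\<in>UNIV. ?d $ l * T $ l)" by (simp add: inner_vec_def)
  also have "\<dots> = (\<Sum>l\<in>{i,j}. ?d $ l * T $ l)"
    by (rule sum.mono_neutral_right) (auto simp: d[simplified])
  also have "\<dots> = 0" using False assms by (simp add: perm_act_swap_nth algebra_simps)
  finally show ?thesis .
qed

lemma Delta_K:
  assumes "z \<in> Delta \<sigma>"
  shows "z $ l = z $ (\<sigma> l)"
proof -
  let ?R = "{(i, j). z $ i = z $ j}" and ?O = "{(i, j). \<exists>k. (\<sigma> ^^ k) i = j}"
  have "?R `` {l} \<in> UNIV // ?R" by (rule quotientI) simp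
  hence "?R `` {l} \<in> UNIV // ?O" using assms by (simp add: Delta_def coord_partition_def orbit_partition_def)
  then obtain i' where e: "?R `` {l} = ?O `` {i'}" by (auto elim: quotientE)
  have "l \<in> ?R `` {l}" by simp
  then obtain k where "(\<sigma>^^k) i' = l" using e by auto
  hence "(\<sigma>^^Suc k) i' = \<sigma> l" by simp
  hence "\<sigma> l \<in> ?R `` {l}" using e by blast
  thus ?thesis by simp
qed

lemma Delta_eq:
  assumes "y \<in> Delta \<sigma>" "y $ i = y $ j" "\<forall>l. z $ l = z $ (\<sigma> l)"
  shows "z $ i = z $ j"
proof -
  let ?R = "{(i, j). y $ i = y $ j}" and ?O = "{(i, j). \<exists>k. (\<sigma> ^^ k) i = j}"
  have "?R `` {i} \<in> UNIV // ?R" by (rule quotientI) simp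
  hence "?R `` {i} \<in> UNIV // ?O" using assms by (simp add: Delta_def coord_partition_def orbit_partition_def)
  then obtain i' where e: "?R `` {i} = ?O `` {i'}" by (auto elim: quotientE)
  have it: "\<And>k. z $ ((\<sigma>^^k) i') = z $ i'"
  proof -
    fix k show "z $ ((\<sigma>^^k) i') = z $ i'" by (induction k) (auto simp: assms(3)[rule_format, symmetric])
  qed
  have "i \<in> ?R `` {i}" "j \<in> ?R `` {i}" using assms(2) by auto
  hence "i \<in> ?O `` {i'}" "j \<in> ?O `` {i'}" by (metis e)+
  then obtain k m where "(\<sigma>^^k) i' = i" "(\<sigma>^^m) i' = j" by auto
  thus ?thesis using it by metis
qed

lemma Delta_of_eq:
  assumes "y \<in> Delta \<sigma>" "\<forall>i j. z $ i = z $ j \<longleftrightarrow> y $ i = y $ j"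
  shows "z \<in> Delta \<sigma>"
proof -
  have "{(i, j). z $ i = z $ j} = {(i, j). y $ i = y $ j}" using assms(2) by auto
  thus ?thesis using assms(1) by (simp add: Delta_def coord_partition_def)
qed



lemma deriv_in_K:
  fixes \<psi> :: "real^'n \<Rightarrow> real^'n"
  assumes d: "(\<psi> has_derivative D) (at w)"
    and r: "r > 0" and z: "\<forall>w'\<in>ball w r \<inter> L0. \<psi> w' $ i = \<psi> w' $ j"
    and L: "subspace L0" "w \<in> L0" "l \<in> L0"
  shows "D l $ i = D l $ j"
proof -
  have bl: "bounded_linear D" using d by (rule has_derivative_bounded_linear)
  have line: "((\<lambda>t::real. w + t *\<^sub>R l) has_derivative (\<lambda>t. t *\<^sub>R l)) (at 0)"
    by (auto intro!: derivative_eq_intros)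
  have d': "(\<psi> has_derivative D) (at ((\<lambda>t::real. w + t *\<^sub>R l) 0))" using d by simp
  have comp: "((\<lambda>t. \<psi> (w + t *\<^sub>R l)) has_derivative (\<lambda>t. D (t *\<^sub>R l))) (at 0)"
    using has_derivative_compose[OF line d'] by (simp add: comp_def)
  have blc: "bounded_linear (\<lambda>v::real^'n. v $ i - v $ j)"
    by (intro bounded_linear_sub bounded_linear_vec_nth)
  have "((\<lambda>t. \<psi> (w + t *\<^sub>R l) $ i - \<psi> (w + t *\<^sub>R l) $ j) has_derivative
        (\<lambda>t. D (t *\<^sub>R l) $ i - D (t *\<^sub>R l) $ j)) (at 0)"
    using bounded_linear.has_derivative[OF blc comp] by simp
  moreover have "(\<lambda>t. D (t *\<^sub>R l) $ i - D (t *\<^sub>R l) $ j) = (\<lambda>t. (D l $ i - D l $ j) * t)"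
    using linear_cmul[OF bounded_linear.linear[OF bl]] by (auto simp: algebra_simps)
  ultimately have D1: "DERIV (\<lambda>t. \<psi> (w + t *\<^sub>R l) $ i - \<psi> (w + t *\<^sub>R l) $ j) 0 :> (D l $ i - D l $ j)"
    by (simp add: has_field_derivative_def)
  have ev: "eventually (\<lambda>t. \<psi> (w + t *\<^sub>R l) $ i - \<psi> (w + t *\<^sub>R l) $ j = 0) (nhds (0::real))"
    unfolding eventually_nhds_metric
  proof (intro exI conjI allI impI)
    show "r / (norm l + 1) > 0" using r by (intro divide_pos_pos) (auto intro: add_nonneg_pos)
    fix t :: real assume "dist t 0 < r / (norm l + 1)"
    hence "\<bar>t\<bar> * (norm l + 1) < r" by (simp add: field_simps add_pos_nonneg)
    moreover have "\<bar>t\<bar> * norm l \<le> \<bar>t\<bar> * (norm l + 1)" by (simp add: mult_left_mono)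
    ultimately have "norm (t *\<^sub>R l) < r" by simp
    hence "w + t *\<^sub>R l \<in> ball w r" by (simp add: dist_norm)
    moreover have "w + t *\<^sub>R l \<in> L0" using L by (simp add: subspace_add subspace_scale)
    ultimately show "\<psi> (w + t *\<^sub>R l) $ i - \<psi> (w + t *\<^sub>R l) $ j = 0" using z by auto
  qed
  have "DERIV (\<lambda>t. \<psi> (w + t *\<^sub>R l) $ i - \<psi> (w + t *\<^sub>R l) $ j) 0 :> 0"
    using DERIV_cong_ev[OF refl ev refl] by simp
  with D1 have "D l $ i - D l $ j = 0" by (rule DERIV_unique)
  thus ?thesis by simp
qed



lemma local_flat:
  fixes x0 :: "real^'n" and \<phi> \<psi> :: "real^'n \<Rightarrow> real^'n"
    and \<phi>' \<psi>' :: "real^'n \<Rightarrow> ((real^'n) \<Rightarrow>\<^sub>L (real^'n))"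
  assumes \<delta>: "\<delta> > 0"
    and sym: "\<forall>\<sigma>. \<sigma> permutes UNIV \<and> perm_act \<sigma> x0 = x0 \<longrightarrow> perm_act \<sigma> ` (M \<inter> ball x0 \<delta>) = M \<inter> ball x0 \<delta>"
    and U: "open U" "x0 \<in> U" and V: "open V" and L: "subspace L0"
    and d\<phi>: "\<forall>x\<in>U. (\<phi> has_derivative blinfun_apply (\<phi>' x)) (at x)"
    and c\<phi>: "continuous (at x0) \<phi>'"
    and d\<psi>: "\<forall>z\<in>V. (\<psi> has_derivative blinfun_apply (\<psi>' z)) (at z)"
    and c\<psi>: "continuous (at (\<phi> x0)) \<psi>'"
    and im: "\<phi> ` U = V" and inv: "\<forall>y\<in>U. \<psi> (\<phi> y) = y" and imM: "\<phi> ` (M \<inter> U) = V \<inter> L0"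
    and x0: "x0 \<in> M" "x0 \<in> KE E"
    and lim: "x0 islimpt {x\<in>M. \<exists>\<epsilon>>0. M \<inter> ball x \<epsilon> \<subseteq> KE E}"
  shows "\<exists>s>0. M \<inter> ball x0 s \<subseteq> KE E"
proof -
  define c0 where "c0 = \<phi> x0"
  have c0V: "c0 \<in> V" using im U unfolding c0_def by blast
  define C where "C = norm (\<phi>' x0) + 1"
  have Cpos: "C > 0" unfolding C_def by (simp add: add_nonneg_pos)
  define \<eta> where "\<eta> = 1 / (8 * C)"
  have \<eta>pos: "\<eta> > 0" unfolding \<eta>_def using Cpos by simp
  obtain r0 where r0: "r0 > 0" "\<forall>w. dist w c0 < r0 \<longrightarrow> dist (\<psi>' w) (\<psi>' c0) < \<eta>"
    using c\<psi> \<eta>pos unfolding continuous_at_eps_delta c0_def by blast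
  obtain r1' where r1': "r1' > 0" "ball c0 r1' \<subseteq> V" using V c0V open_contains_ball by blast
  define r1 where "r1 = min r0 r1'"
  have r1: "r1 > 0" "ball c0 r1 \<subseteq> V" "\<forall>w. dist w c0 < r1 \<longrightarrow> dist (\<psi>' w) (\<psi>' c0) < \<eta>"
    using r0 r1' unfolding r1_def by auto
  obtain s1' where s1': "s1' > 0" "\<forall>x. dist x x0 < s1' \<longrightarrow> dist (\<phi>' x) (\<phi>' x0) < 1"
    using c\<phi> unfolding continuous_at_eps_delta by (meson zero_less_one)
  obtain s1'' where s1'': "s1'' > 0" "ball x0 s1'' \<subseteq> U" using U open_contains_ball by blast
  define s1 where "s1 = min s1' s1''"
  have s1: "s1 > 0" "ball x0 s1 \<subseteq> U" "\<forall>x. dist x x0 < s1 \<longrightarrow> dist (\<phi>' x) (\<phi>' x0) < 1"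
    using s1' s1'' unfolding s1_def by auto
  have "continuous (at x0) \<phi>" using d\<phi> U has_derivative_continuous by blast
  then obtain s2 where s2: "s2 > 0" "\<forall>x. dist x x0 < s2 \<longrightarrow> dist (\<phi> x) c0 < r1"
    using r1 unfolding continuous_at_eps_delta c0_def by blast
  define s where "s = min s1 (min s2 \<delta>)"
  have s: "s > 0" using s1 s2 \<delta> unfolding s_def by simp
  obtain as where as: "as \<in> M" "\<exists>\<epsilon>>0. M \<inter> ball as \<epsilon> \<subseteq> KE E" "dist as x0 < s"
    using lim s unfolding islimpt_approachable by blast
  obtain \<epsilon> where \<epsilon>: "\<epsilon> > 0" "M \<inter> ball as \<epsilon> \<subseteq> KE E" using as by blast
  have asU: "as \<in> U" using as s1 unfolding s_def by (auto simp: dist_commute)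
  define ws where "ws = \<phi> as"
  have wsL: "ws \<in> L0" "ws \<in> V" using imM asU as unfolding ws_def by blast+
  have wsb: "dist ws c0 < r1" using s2 as unfolding ws_def s_def by auto
  have "continuous (at ws) \<psi>" using d\<psi> wsL has_derivative_continuous by blast
  then obtain r2' where r2': "r2' > 0" "\<forall>w. dist w ws < r2' \<longrightarrow> dist (\<psi> w) (\<psi> ws) < \<epsilon>"
    using \<epsilon> unfolding continuous_at_eps_delta by blast
  obtain r3 where r3: "r3 > 0" "ball ws r3 \<subseteq> V" using V wsL open_contains_ball by blast
  define r2 where "r2 = min r2' r3"
  have r2: "r2 > 0" "\<forall>w. dist w ws < r2 \<longrightarrow> dist (\<psi> w) (\<psi> ws) < \<epsilon>" "ball ws r2 \<subseteq> V"
    using r2' r3 unfolding r2_def by auto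
  have \<psi>ws: "\<psi> ws = as" using inv asU unfolding ws_def by blast
  have Tin: "\<psi>' ws l $ i = \<psi>' ws l $ j" if l: "l \<in> L0" and ij: "(i,j) \<in> E" for l i j
  proof (rule deriv_in_K[OF _ r2(1) _ L wsL(1) l])
    show "(\<psi> has_derivative blinfun_apply (\<psi>' ws)) (at ws)" using d\<psi> wsL by blast
    show "\<forall>w'\<in>ball ws r2 \<inter> L0. \<psi> w' $ i = \<psi> w' $ j"
    proof
      fix w' assume w': "w' \<in> ball ws r2 \<inter> L0"
      have "dist (\<psi> w') as < \<epsilon>" using r2 w' \<psi>ws by (auto simp: dist_commute)
      have "w' \<in> V \<inter> L0" using w' r2(3) by auto
      hence "w' \<in> \<phi> ` (M \<inter> U)" using imM by simp
      then obtain m where m: "m \<in> M" "m \<in> U" "\<phi> m = w'" by blast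
      have "\<psi> w' = m" using m inv by blast
      hence "m \<in> M \<inter> ball as \<epsilon>" using m(1) \<open>dist (\<psi> w') as < \<epsilon>\<close> by (simp add: dist_commute)
      hence "\<psi> w' \<in> KE E" using \<epsilon>(2) \<open>\<psi> w' = m\<close> by blast
      thus "\<psi> w' $ i = \<psi> w' $ j" using ij unfolding KE_def by blast
    qed
  qed
  have main: "a \<in> KE E" if a: "a \<in> M" "dist a x0 < s" for a
  proof (rule ccontr)
    assume "a \<notin> KE E"
    then obtain i j where ij: "(i,j) \<in> E" "a $ i \<noteq> a $ j" unfolding KE_def by blast
    define b where "b = perm_act (Transposition.transpose i j) a"
    have perm: "Transposition.transpose i j permutes UNIV" by (simp add: permutes_swap_id)
    have fx: "perm_act (Transposition.transpose i j) x0 = x0"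
      using x0(2) ij(1) unfolding KE_def by (auto intro: perm_act_swap_fix)
    have aball: "a \<in> M \<inter> ball x0 \<delta>" using a unfolding s_def by (auto simp: dist_commute)
    have "b \<in> perm_act (Transposition.transpose i j) ` (M \<inter> ball x0 \<delta>)"
      unfolding b_def using aball by blast
    hence bM: "b \<in> M" using sym perm fx by blast
    have "b - x0 = perm_act (Transposition.transpose i j) (a - x0)"
      unfolding b_def perm_act_swap_diff fx ..
    hence dbx: "dist b x0 = dist a x0" by (simp add: dist_norm perm_act_swap_norm)
    have aU: "a \<in> ball x0 s1" "b \<in> ball x0 s1" using a dbx unfolding s_def by (auto simp: dist_commute)
    define u where "u = \<phi> a"
    define v where "v = \<phi> b"
    have uL: "u \<in> L0" "v \<in> L0" using imM aU s1(2) a(1) bM unfolding u_def v_def by blast+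
    have ub: "u \<in> ball c0 r1" "v \<in> ball c0 r1" using s2 a dbx unfolding u_def v_def s_def
      by (auto simp: dist_commute)
    have \<psi>u: "\<psi> u = a" "\<psi> v = b" using inv aU s1(2) unfolding u_def v_def by blast+
    have B1: "norm (u - v) \<le> C * norm (a - b)"
      unfolding u_def v_def
    proof (rule differentiable_bound[OF convex_ball _ _ aU])
      fix x assume x: "x \<in> ball x0 s1"
      show "(\<phi> has_derivative blinfun_apply (\<phi>' x)) (at x within ball x0 s1)"
        using d\<phi> x s1(2) by (blast intro: has_derivative_at_withinI)
      have "norm (\<phi>' x) \<le> norm (\<phi>' x0) + dist (\<phi>' x) (\<phi>' x0)"
        by (metis dist_norm norm_triangle_sub add.commute)
      also have "\<dots> \<le> C" using s1(3) x unfolding C_def by (auto simp: dist_commute)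
      finally show "onorm (blinfun_apply (\<phi>' x)) \<le> C" by (simp add: norm_blinfun.rep_eq)
    qed
    have seg: "v + t *\<^sub>R (u - v) \<in> ball c0 r1" if t: "t \<in> {0..1}" for t
    proof -
      have "v + t *\<^sub>R (u - v) = (1 - t) *\<^sub>R v + t *\<^sub>R u" by (simp add: algebra_simps)
      thus ?thesis
        using convex_ball[of c0 r1, unfolded convex_alt] ub t by auto
    qed
    have der: "(\<psi> has_derivative blinfun_apply (\<psi>' x)) (at x within ball c0 r1)"
      if x: "x \<in> ball c0 r1" for x
      using d\<psi> x r1(2) by (blast intro: has_derivative_at_withinI)
    have bnd: "onorm (blinfun_apply (\<psi>' x) - blinfun_apply (\<psi>' ws)) \<le> 2 * \<eta>"
      if x: "x \<in> ball c0 r1" for x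
    proof -
      have "norm (\<psi>' x - \<psi>' ws) \<le> dist (\<psi>' x) (\<psi>' c0) + dist (\<psi>' ws) (\<psi>' c0)"
        by (metis dist_norm dist_triangle2)
      also have "\<dots> \<le> 2 * \<eta>" using r1(3) x wsb by (smt (verit) dist_commute mem_ball)
      finally show ?thesis
        by (simp add: norm_blinfun.rep_eq minus_blinfun.rep_eq fun_diff_def)
    qed
    have wsin: "ws \<in> ball c0 r1" using wsb by (simp add: dist_commute)
    have B2: "norm (\<psi> u - \<psi> v - blinfun_apply (\<psi>' ws) (u - v)) \<le> norm (u - v) * (2 * \<eta>)"
      using differentiable_bound_linearization[OF seg der bnd wsin] by simp
    define T where "T = blinfun_apply (\<psi>' ws) (u - v)"
    have "u - v \<in> L0" using uL L by (simp add: subspace_diff)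
    hence "T $ i = T $ j" unfolding T_def using Tin ij(1) by blast
    hence inn: "inner (a - b) T = 0" unfolding b_def by (rule inner_swap_zero)
    have B3: "norm (a - b - T) \<le> norm (a - b) / 4"
    proof -
      have "norm (a - b - T) \<le> norm (u - v) * (2 * \<eta>)" using B2 \<psi>u unfolding T_def by simp
      also have "\<dots> \<le> C * norm (a - b) * (2 * \<eta>)" using B1 \<eta>pos by (simp add: mult_right_mono)
      also have "\<dots> = norm (a - b) / 4" unfolding \<eta>_def using Cpos by (simp add: field_simps)
      finally show ?thesis .
    qed
    have "(norm (a - b))\<^sup>2 = inner (a - b) (a - b - T)"
      by (simp add: inner_diff_right inn power2_norm_eq_inner)
    also have "\<dots> \<le> norm (a - b) * norm (a - b - T)" by (rule norm_cauchy_schwarz)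
    also have "\<dots> \<le> norm (a - b) * (norm (a - b) / 4)" using B3 by (intro mult_left_mono) auto
    finally have h: "(norm (a - b))\<^sup>2 \<le> norm (a - b) * (norm (a - b) / 4)" .
    hence "(norm (a - b))\<^sup>2 \<le> 0" by (simp add: power2_eq_square)
    hence "norm (a - b) = 0" by (metis antisym zero_le_power2 power_eq_0_iff zero_neq_numeral)
    hence "a = b" by simp
    hence "a $ i = a $ j" unfolding b_def by (metis perm_act_swap_nth transpose_apply_first)
    thus False using ij(2) by simp
  qed
  show ?thesis using s main by (intro exI[of _ s]) (auto simp: dist_commute)
qed



lemma closed_KE: "closed (KE E)"
proof -
  have "KE E = (\<Inter>p\<in>E. {x. x $ fst p = x $ snd p})" unfolding KE_def by force
  moreover have "closed {x::real^'a. x $ fst p = x $ snd p}" for p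
    by (intro closed_Collect_eq continuous_intros)
  ultimately show ?thesis by (auto intro!: closed_INT)
qed

lemma key:
  fixes M :: "(real^'n::{finite,linorder}) set"
  assumes lsm: "locally_symmetric_C2_submanifold M" and y: "y \<in> M" and \<rho>: "\<rho> > 0"
    and sub: "M \<inter> ball y \<rho> \<subseteq> KE E"
  shows "M \<subseteq> KE E"
proof -
  define A where "A = {x\<in>M. \<exists>\<epsilon>>0. M \<inter> ball x \<epsilon> \<subseteq> KE E}"
  have conn: "connected M" and sm: "C2_submanifold M" and ls: "locally_symmetric M"
    using lsm unfolding locally_symmetric_C2_submanifold_def by auto
  have op: "openin (top_of_set M) A"
    unfolding openin_euclidean_subtopology_iff
  proof
    show "A \<subseteq> M" unfolding A_def by auto
    show "\<forall>x\<in>A. \<exists>e>0. \<forall>x'\<in>M. dist x' x < e \<longrightarrow> x' \<in> A"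
    proof
      fix x assume "x \<in> A"
      then obtain \<epsilon> where \<epsilon>: "\<epsilon> > 0" "M \<inter> ball x \<epsilon> \<subseteq> KE E" unfolding A_def by auto
      show "\<exists>e>0. \<forall>x'\<in>M. dist x' x < e \<longrightarrow> x' \<in> A"
      proof (intro exI conjI ballI impI)
        show "\<epsilon>/2 > 0" using \<epsilon> by simp
        fix x' assume x': "x' \<in> M" "dist x' x < \<epsilon>/2"
        have "ball x' (\<epsilon>/2) \<subseteq> ball x \<epsilon>"
        proof
          fix z assume z: "z \<in> ball x' (\<epsilon>/2)"
          have "dist x z \<le> dist x x' + dist x' z" by (rule dist_triangle)
          moreover have "dist x x' = dist x' x" by (rule dist_commute)
          ultimately show "z \<in> ball x \<epsilon>" using z x'(2) by simp
        qed
        thus "x' \<in> A" unfolding A_def using x' \<epsilon> by (intro CollectI conjI exI[of _ "\<epsilon>/2"]) auto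
      qed
    qed
  qed
  have AKE: "A \<subseteq> KE E"
  proof
    fix x assume "x \<in> A"
    then obtain \<epsilon> where "x \<in> M" "\<epsilon> > 0" "M \<inter> ball x \<epsilon> \<subseteq> KE E" unfolding A_def by blast
    hence "x \<in> M \<inter> ball x \<epsilon>" by simp
    thus "x \<in> KE E" using \<open>M \<inter> ball x \<epsilon> \<subseteq> KE E\<close> by blast
  qed
  have cl: "closedin (top_of_set M) A"
    unfolding closedin_limpt
  proof (intro conjI allI impI)
    show "A \<subseteq> M" unfolding A_def by auto
    fix x0 assume x0: "x0 islimpt A \<and> x0 \<in> M"
    have "x0 islimpt KE E" using x0 islimpt_subset AKE by blast
    hence x0K: "x0 \<in> KE E" using closed_KE closed_limpt by blast
    obtain U V and \<phi> \<psi> :: "real^'n::{finite,linorder} \<Rightarrow> real^'n::{finite,linorder}" and L where ch: "open U" "x0 \<in> U" "open V" "subspace L" "C2_on U \<phi>" "C2_on V \<psi>"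
      "\<phi> ` U = V" "\<forall>y\<in>U. \<psi> (\<phi> y) = y" "\<forall>z\<in>V. \<phi> (\<psi> z) = z" "\<phi> ` (M \<inter> U) = V \<inter> L"
      using bspec[OF sm[unfolded C2_submanifold_def] conjunct2[OF x0]] by (elim exE conjE) (rule that; assumption)
    obtain \<phi>' \<phi>'' where d\<phi>: "\<forall>x\<in>U. (\<phi> has_derivative blinfun_apply (\<phi>' x)) (at x)"
      "\<forall>x\<in>U. (\<phi>' has_derivative blinfun_apply (\<phi>'' x)) (at x)"
      using ch(5) unfolding C2_on_def by blast
    obtain \<psi>' \<psi>'' where d\<psi>: "\<forall>x\<in>V. (\<psi> has_derivative blinfun_apply (\<psi>' x)) (at x)"
      "\<forall>x\<in>V. (\<psi>' has_derivative blinfun_apply (\<psi>'' x)) (at x)"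
      using ch(6) unfolding C2_on_def by blast
    have c\<phi>: "continuous (at x0) \<phi>'" using d\<phi>(2) ch(2) has_derivative_continuous by blast
    have "\<phi> x0 \<in> V" using ch(7) ch(2) by blast
    hence c\<psi>: "continuous (at (\<phi> x0)) \<psi>'" using d\<psi>(2) has_derivative_continuous by blast
    obtain \<delta> where \<delta>: "\<delta> > 0" "\<forall>y\<in>M \<inter> ball x0 \<delta>. \<forall>\<sigma>. \<sigma> permutes UNIV \<and> perm_act \<sigma> y = y \<longrightarrow>
        perm_act \<sigma> ` (M \<inter> ball x0 \<delta>) = M \<inter> ball x0 \<delta>"
      using ls x0 unfolding locally_symmetric_def by blast
    have sym: "\<forall>\<sigma>. \<sigma> permutes UNIV \<and> perm_act \<sigma> x0 = x0 \<longrightarrow> perm_act \<sigma> ` (M \<inter> ball x0 \<delta>) = M \<inter> ball x0 \<delta>"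
      using bspec[OF \<delta>(2), of x0] \<delta>(1) x0 by simp
    have "\<exists>s>0. M \<inter> ball x0 s \<subseteq> KE E"
      by (rule local_flat[OF \<delta>(1) sym ch(1,2,3,4) d\<phi>(1) c\<phi> d\<psi>(1) c\<psi> ch(7,8,10) _ x0K])
        (use x0 in \<open>auto simp: A_def\<close>)
    thus "x0 \<in> A" using x0 unfolding A_def by auto
  qed
  have "y \<in> A" using y \<rho> sub unfolding A_def by auto
  hence "A = M" using conn op cl unfolding connected_clopen by blast
  thus ?thesis using AKE by simp
qed



lemma finite_cover_piece:
  fixes M :: "'a::metric_space set"
  assumes "finite \<F>" "\<forall>F\<in>\<F>. closed F"
  shows "x \<in> M \<Longrightarrow> r > 0 \<Longrightarrow> M \<inter> ball x r \<subseteq> \<Union>\<F> \<Longrightarrow> \<exists>F\<in>\<F>. \<exists>y\<in>M. \<exists>r'>0. M \<inter> ball y r' \<subseteq> F"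
  using assms
proof (induction \<F> arbitrary: x r rule: finite_induct)
  case empty
  thus ?case by auto
next
  case (insert F \<F>)
  show ?case
  proof (cases "M \<inter> ball x r \<subseteq> F")
    case True thus ?thesis using insert.prems by blast
  next
    case False
    then obtain z where z: "z \<in> M" "z \<in> ball x r" "z \<notin> F" by blast
    have "open (- F)" using insert.prems by auto
    then obtain e where e: "e > 0" "ball z e \<subseteq> - F" using z open_contains_ball by blast
    define r' where "r' = min e (r - dist x z)"
    have r': "r' > 0" using e z unfolding r'_def by simp
    have "ball z r' \<subseteq> ball x r"
    proof
      fix w assume "w \<in> ball z r'"
      hence "dist z w < r - dist x z" unfolding r'_def by simp
      moreover have "dist x w \<le> dist x z + dist z w" by (rule dist_triangle)
      ultimately show "w \<in> ball x r" by simp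
    qed
    moreover have "ball z r' \<subseteq> - F" using e unfolding r'_def by auto
    ultimately have "M \<inter> ball z r' \<subseteq> \<Union>\<F>" using insert.prems(3) by blast
    then obtain G y r'' where "G \<in> \<F>" "y \<in> M" "r'' > 0" "M \<inter> ball y r'' \<subseteq> G"
      using insert.IH[OF z(1) r'] insert.prems(4) by blast
    thus ?thesis by blast
  qed
qed

theorem corollary3p24:
  fixes \<sigma>s :: "'n::{finite,linorder} \<Rightarrow> 'n::{finite,linorder}" and M :: "(real^'n::{finite,linorder}) set"
    and y :: "real^'n::{finite,linorder}" and \<rho> :: real
  assumes "locally_symmetric_C2_submanifold M"
    and "\<sigma>s permutes UNIV"
    and "y \<in> M" and "\<rho> > 0"
    and "M \<inter> ball y \<rho> \<subseteq> Delta \<sigma>s"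
  shows "\<forall>xb\<in>M. \<forall>\<delta>>0. M \<inter> Delta \<sigma>s \<inter> ball xb \<delta> \<noteq> {}"
proof (intro ballI allI impI)
  fix xb \<delta> assume xb: "xb \<in> M" and \<delta>: "(\<delta>::real) > 0"
  define E\<sigma> where "E\<sigma> = {(l, \<sigma>s l) | l. True}"
  have "M \<inter> ball y \<rho> \<subseteq> KE E\<sigma>"
    using assms(5) Delta_K unfolding KE_def E\<sigma>_def by fastforce
  hence MK: "M \<subseteq> KE E\<sigma>" using key assms(1,3,4) by blast
  have yD: "y \<in> Delta \<sigma>s" using assms(3,4,5) by auto
  show "M \<inter> Delta \<sigma>s \<inter> ball xb \<delta> \<noteq> {}"
  proof
    assume empty: "M \<inter> Delta \<sigma>s \<inter> ball xb \<delta> = {}"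
    define \<F> where "\<F> = (\<lambda>p. KE {p}) ` {(i, j). y $ i \<noteq> y $ j}"
    have fin: "finite \<F>" unfolding \<F>_def by simp
    have clo: "\<forall>F\<in>\<F>. closed F" unfolding \<F>_def using closed_KE by blast
    have cov: "M \<inter> ball xb \<delta> \<subseteq> \<Union>\<F>"
    proof
      fix z assume z: "z \<in> M \<inter> ball xb \<delta>"
      have zK: "\<forall>l. z $ l = z $ (\<sigma>s l)" using MK z unfolding KE_def E\<sigma>_def by blast
      have "z \<notin> Delta \<sigma>s" using z empty by blast
      hence "\<not> (\<forall>i j. z $ i = z $ j \<longleftrightarrow> y $ i = y $ j)" using Delta_of_eq[OF yD] by blast
      then obtain i j where "z $ i = z $ j" "y $ i \<noteq> y $ j"
        using Delta_eq[OF yD _ zK] by blast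
      hence "z \<in> KE {(i,j)}" "(i,j) \<in> {(i, j). y $ i \<noteq> y $ j}" unfolding KE_def by auto
      thus "z \<in> \<Union>\<F>" unfolding \<F>_def by blast
    qed
    obtain F y' r' where F: "F \<in> \<F>" "y' \<in> M" "r' > 0" "M \<inter> ball y' r' \<subseteq> F"
      using finite_cover_piece[OF fin clo xb \<delta> cov] by blast
    then obtain i j where ij: "F = KE {(i,j)}" "y $ i \<noteq> y $ j" unfolding \<F>_def by blast
    have "M \<subseteq> KE {(i,j)}" using key[OF assms(1) F(2,3)] F(4) ij(1) by blast
    hence "y $ i = y $ j" using assms(3) unfolding KE_def by blast
    thus False using ij(2) by simp
  qed
qed

end
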